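(* Let $V$ be a finite set of variables, let $x,y,a,b\in V$ with $x\ne y$, $a\ne b$, let $\mathbf Z\subseteq V\setminus\{x,y\}$, $\mathbf X\subseteq V\setminus\{a,b\}$, let $\sigma\in\{\text{preferred},\text{stable}\}$, and let $D^{xy\mathbf Z}_{\mathit{csl}}$ be the extended causal ABA framework defined in the context. For every $S\in\sigma(D^{xy\mathbf Z}_{\mathit{csl}})$: $(a\perp\!\!\!\perp b\mid\mathbf X)\in S$ if and only if $a$ and $b$ are d-separated given $\mathbf X$ in $G(S)=(V,\{(u,v)\mid\mathit{arr}_{uv}\in S\})$.
   Context: ABA. An ABA framework is $D=(\mathcal L,\mathcal R,\mathcal A,\overline{\cdot})$ with sentences $\mathcal L$, rules $a_0\leftarrow a_1,\dots,a_n$ ($n\ge0$), assumptions $\mathcal A\subseteq\mathcal L$ and contrary function $\overline{\cdot}:\mathcal A\to\mathcal L$. $S\vdash q$ ($S\subseteq\mathcal A$) if there is a finite rooted labelled tree with root $q$, set of leaf labels $S$ or $S\cup\{\top\}$, and every inner node labelled by the head of a rule whose children are labelled by the distinct body elements (one child $\top$ for an empty body). $S$ attacks $T$ if some $S'\subseteq S$ derives $\overline a$ for some $a\in T$. $S$ is closed if $S\vdash a$ with $a\in\mathcal A$ implies $a\in S$. Conflict-free: does not attack itself; $S$ defends $T$ if it attacks every attacker of $T$; admissible: conflict-free and self-defending; complete: admissible and contains every assumption set it defends; preferred: $\subseteq$-maximal complete; stable: admissible and attacks $\{a\}$ for every assumption $a\notin S$. Since the framework below is non-flat, extensions are required to be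 closed. Graphs. A path is a sequence of distinct nodes with consecutive nodes adjacent; an inner node $x_i$ of $x_1\dots x_n$ is a collider if $(x_{i-1},x_i)$ and $(x_{i+1},x_i)$ are edges; descendants are nodes reachable by directed paths. For $\mathbf Z\subseteq V\setminus\{x,y\}$, an $x$-$y$-path is $\mathbf Z$-active if every collider on it is in $\mathbf Z$ or has a descendant in $\mathbf Z$ and every other node on it is not in $\mathbf Z$; $x,y$ are d-separated given $\mathbf Z$ if no $\mathbf Z$-active $x$-$y$-path exists. An $x$-$y$-collider-tree of a DAG $H$ is a subgraph $t$ of $H$ with an $x$-$y$-path $p_t$ in $t$ such that every node of $t$ not on $p_t$ is a descendant of a collider of $p_t$; it is $\mathbf Z$-active if $p_t$ is $\mathbf Z$-active in $(V,\text{edges of }t)$. By an $x$-$y$-path over $V$ (without reference to a graph) we mean a sequence of distinct variables from $x$ to $y$. The framework $D_{\mathit{ds}}$. Assumptions: $\mathit{arr}_{uv}$ for all ordered pairs of distinct $u,v\in V$; one $\mathit{noe}_{uv}=\mathit{noe}_{vu}$ per unordered pair; independence assumptions $(u\perp\!\!\!\perp v\mid\mathbf W)$ for $\mathbf W\subseteq V$, distinct $u,v\in V\setminus\mathbf W$ (symmetric in $u,v$). Each assumption $a$ has its own distinct fresh contrary $\overline a$. Rules: (i) $\overline a\leftarrow b$ for distinct $a,b\in\{\mathit{arr}_{uv},\mathit{arr}_{vu},\mathit{noe}_{uv}\}$; (ii) for every sequence $x_1\dots x_k$ with consecutive elements distinct and $x_1=x_k$ and every $1\le i<k$: $\overline{\mathit{arr}_{x_ix_{i+1}}}\leftarrow\mathit{arr}_{x_1x_2},\dots,\mathit{arr}_{x_{k-1}x_k}$;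 (iii) $\mathit{dpath}_{uv}\leftarrow\mathit{arr}_{uv}$; $\mathit{dpath}_{uw}\leftarrow\mathit{dpath}_{uv},\mathit{arr}_{vw}$; $e_{uv}\leftarrow\mathit{arr}_{uv}$; $e_{uv}\leftarrow\mathit{arr}_{vu}$; $\overline{\mathit{noe}_{uv}}\leftarrow e_{uv}$; (iv) for all distinct $u,v$, $\mathbf W\subseteq V\setminus\{u,v\}$ and every $\mathbf W$-active $u$-$v$-collider-tree $t$ (of any DAG on $V$), $\overline{(u\perp\!\!\!\perp v\mid\mathbf W)}\leftarrow\{\mathit{arr}_{st}\mid(s,t)\text{ an edge of }t\}$. The framework $D^{xy\mathbf Z}_{\mathit{csl}}$. Its assumptions are those of $D_{\mathit{ds}}$ together with assumptions $\mathit{bp}_{p\mid\mathbf W}$ for every $u$-$v$-path $p$ over $V$ and every $\mathbf W\subseteq V\setminus\{u,v\}$, with contrary $\overline{\mathit{bp}_{p\mid\mathbf W}}=\mathit{ap}_{p\mid\mathbf W}$. Its rules are those of $D_{\mathit{ds}}$ plus: (a) $(x\perp\!\!\!\perp y\mid\mathbf Z)\leftarrow\mathit{bp}_{p_1\mid\mathbf Z},\dots,\mathit{bp}_{p_k\mid\mathbf Z}$ where $p_1,\dots,p_k$ are all $x$-$y$-paths over $V$; (b) for every $\mathbf Z$-active $x$-$y$-collider-tree $t$ (of any DAG on $V$) with underlying path $p_t$, the rule $\mathit{ap}_{p_t\mid\mathbf Z}\leftarrow\{\mathit{arr}_{st}\mid(s,t)\text{ an edge of }t\}$; (c) the fact $\overline{(x\perp\!\!\!\perp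 y\mid\mathbf Z)}\leftarrow$ (empty body). *)

theory Defs
  imports Main
begin

text \<open>A framework is given by a rule set R (pairs head/body), an assumption set A and a
contrary function ctr.  derives R A S q holds iff there is a derivation tree with root q
whose set of assumption leaves is exactly S (children of a rule node are labelled by the
distinct body elements; an empty body gives a single top leaf, contributing nothing to S).\<close>

inductive derives :: "('s \<times> 's set) set \<Rightarrow> 's set \<Rightarrow> 's set \<Rightarrow> 's \<Rightarrow> bool"
  for R :: "('s \<times> 's set) set" and A :: "'s set" where
  leaf: "a \<in> A \<Longrightarrow> derives R A {a} a"
| rule: "\<lbrakk>(h, B) \<in> R; finite B; \<forall>b\<in>B. derives R A (f b) b\<rbrakk>
          \<Longrightarrow> derives R A (\<Union>b\<in>B. f b) h"

definition attacks :: "('s \<times> 's set) set \<Rightarrow> 's set \<Rightarrow> ('s \<Rightarrow> 's) \<Rightarrow> 's set \<Rightarrow> 's set \<Rightarrow> bool" where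
  "attacks R A ctr S T \<longleftrightarrow> (\<exists>S'\<subseteq>S. \<exists>a\<in>T. derives R A S' (ctr a))"

definition closed_set :: "('s \<times> 's set) set \<Rightarrow> 's set \<Rightarrow> 's set \<Rightarrow> bool" where
  "closed_set R A S \<longleftrightarrow> (\<forall>S'\<subseteq>S. \<forall>a\<in>A. derives R A S' a \<longrightarrow> a \<in> S)"

definition conflict_free :: "('s \<times> 's set) set \<Rightarrow> 's set \<Rightarrow> ('s \<Rightarrow> 's) \<Rightarrow> 's set \<Rightarrow> bool" where
  "conflict_free R A ctr S \<longleftrightarrow> \<not> attacks R A ctr S S"

definition defends :: "('s \<times> 's set) set \<Rightarrow> 's set \<Rightarrow> ('s \<Rightarrow> 's) \<Rightarrow> 's set \<Rightarrow> 's set \<Rightarrow> bool" where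
  "defends R A ctr S T \<longleftrightarrow> (\<forall>U\<subseteq>A. attacks R A ctr U T \<longrightarrow> attacks R A ctr S U)"

definition admissible :: "('s \<times> 's set) set \<Rightarrow> 's set \<Rightarrow> ('s \<Rightarrow> 's) \<Rightarrow> 's set \<Rightarrow> bool" where
  "admissible R A ctr S \<longleftrightarrow> S \<subseteq> A \<and> conflict_free R A ctr S \<and> defends R A ctr S S"

definition complete_ext :: "('s \<times> 's set) set \<Rightarrow> 's set \<Rightarrow> ('s \<Rightarrow> 's) \<Rightarrow> 's set \<Rightarrow> bool" where
  "complete_ext R A ctr S \<longleftrightarrow> admissible R A ctr S \<and> (\<forall>T\<subseteq>A. defends R A ctr S T \<longrightarrow> T \<subseteq> S)"

text \<open>Non-flat framework: extensions are required to be closed.\<close>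

definition preferred_ext :: "('s \<times> 's set) set \<Rightarrow> 's set \<Rightarrow> ('s \<Rightarrow> 's) \<Rightarrow> 's set \<Rightarrow> bool" where
  "preferred_ext R A ctr S \<longleftrightarrow> closed_set R A S \<and> complete_ext R A ctr S \<and>
     \<not> (\<exists>S'. closed_set R A S' \<and> complete_ext R A ctr S' \<and> S \<subset> S')"

definition stable_ext :: "('s \<times> 's set) set \<Rightarrow> 's set \<Rightarrow> ('s \<Rightarrow> 's) \<Rightarrow> 's set \<Rightarrow> bool" where
  "stable_ext R A ctr S \<longleftrightarrow> closed_set R A S \<and> admissible R A ctr S \<and>
     (\<forall>a\<in>A - S. attacks R A ctr S {a})"

datatype semantics = Preferred | Stable

definition extensions :: "semantics \<Rightarrow> ('s \<times> 's set) set \<Rightarrow> 's set \<Rightarrow> ('s \<Rightarrow> 's) \<Rightarrow> 's set set" where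
  "extensions \<sigma> R A ctr = {S. case \<sigma> of Preferred \<Rightarrow> preferred_ext R A ctr S
                                       | Stable \<Rightarrow> stable_ext R A ctr S}"

definition adj :: "('v \<times> 'v) set \<Rightarrow> 'v \<Rightarrow> 'v \<Rightarrow> bool" where
  "adj E u v \<longleftrightarrow> (u, v) \<in> E \<or> (v, u) \<in> E"

definition is_path :: "('v \<times> 'v) set \<Rightarrow> 'v list \<Rightarrow> 'v \<Rightarrow> 'v \<Rightarrow> bool" where
  "is_path E p x y \<longleftrightarrow> p \<noteq> [] \<and> hd p = x \<and> last p = y \<and> distinct p \<and>
     (\<forall>i. Suc i < length p \<longrightarrow> adj E (p ! i) (p ! Suc i))"

definition collider :: "('v \<times> 'v) set \<Rightarrow> 'v list \<Rightarrow> nat \<Rightarrow> bool" where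
  "collider E p i \<longleftrightarrow> 0 < i \<and> Suc i < length p \<and>
     (p ! (i - 1), p ! i) \<in> E \<and> (p ! Suc i, p ! i) \<in> E"

definition active :: "('v \<times> 'v) set \<Rightarrow> 'v list \<Rightarrow> 'v set \<Rightarrow> bool" where
  "active E p Z \<longleftrightarrow> (\<forall>i < length p.
      (collider E p i \<longrightarrow> (p ! i \<in> Z \<or> (\<exists>d\<in>Z. (p ! i, d) \<in> E\<^sup>+))) \<and>
      (\<not> collider E p i \<longrightarrow> p ! i \<notin> Z))"

definition d_separated :: "('v \<times> 'v) set \<Rightarrow> 'v \<Rightarrow> 'v \<Rightarrow> 'v set \<Rightarrow> bool" where
  "d_separated E x y Z \<longleftrightarrow> \<not> (\<exists>p. is_path E p x y \<and> active E p Z)"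

text \<open>An x-y-collider-tree (edge set T, underlying path p) of some DAG H on V;
  nodes of T are the endpoints of its edges; descendants are taken in T.\<close>
definition collider_tree :: "'v set \<Rightarrow> ('v \<times> 'v) set \<Rightarrow> 'v list \<Rightarrow> 'v \<Rightarrow> 'v \<Rightarrow> bool" where
  "collider_tree V T p x y \<longleftrightarrow>
     (\<exists>H. H \<subseteq> V \<times> V \<and> acyclic H \<and> T \<subseteq> H) \<and> is_path T p x y \<and>
     (\<forall>n \<in> Field T. n \<notin> set p \<longrightarrow> (\<exists>i. collider T p i \<and> (p ! i, n) \<in> T\<^sup>+))"

definition active_collider_tree :: "'v set \<Rightarrow> ('v \<times> 'v) set \<Rightarrow> 'v list \<Rightarrow> 'v \<Rightarrow> 'v \<Rightarrow> 'v set \<Rightarrow> bool" where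
  "active_collider_tree V T p x y Z \<longleftrightarrow> collider_tree V T p x y \<and> active T p Z"

definition vpath :: "'v set \<Rightarrow> 'v list \<Rightarrow> 'v \<Rightarrow> 'v \<Rightarrow> bool" where
  "vpath V p x y \<longleftrightarrow> p \<noteq> [] \<and> hd p = x \<and> last p = y \<and> distinct p \<and> set p \<subseteq> V"

text \<open>Sentences. Noe and Indep use sets for the unordered pair, so that
  noe_uv = noe_vu and (u indep v | W) = (v indep u | W). Ctr a is the fresh contrary of a.\<close>
datatype 'v sent =
    Arr 'v 'v
  | Noe "'v set"
  | Indep "'v set" "'v set"
  | Bp "'v list" "'v set"
  | Ap "'v list" "'v set"
  | Dpath 'v 'v
  | Ed 'v 'v
  | Ctr "'v sent"

fun ctr :: "'v sent \<Rightarrow> 'v sent" where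
  "ctr (Bp p W) = Ap p W"
| "ctr a = Ctr a"

definition arr_body :: "('v \<times> 'v) set \<Rightarrow> 'v sent set" where
  "arr_body T = {Arr s t | s t. (s, t) \<in> T}"

definition cyc_body :: "'v list \<Rightarrow> 'v sent set" where
  "cyc_body xs = {Arr (xs ! j) (xs ! Suc j) | j. Suc j < length xs}"

definition asm_ds :: "'v set \<Rightarrow> 'v sent set" where
  "asm_ds V = {Arr u v | u v. u \<in> V \<and> v \<in> V \<and> u \<noteq> v}
     \<union> {Noe {u, v} | u v. u \<in> V \<and> v \<in> V \<and> u \<noteq> v}
     \<union> {Indep {u, v} W | u v W. u \<in> V \<and> v \<in> V \<and> u \<noteq> v \<and> W \<subseteq> V - {u, v}}"

definition rules_ds :: "'v set \<Rightarrow> ('v sent \<times> 'v sent set) set" where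
  "rules_ds V =
     {(ctr a, {b}) | a b u v. u \<in> V \<and> v \<in> V \<and> u \<noteq> v \<and>
         a \<in> {Arr u v, Arr v u, Noe {u, v}} \<and> b \<in> {Arr u v, Arr v u, Noe {u, v}} \<and> a \<noteq> b}
   \<union> {(ctr (Arr (xs ! i) (xs ! Suc i)), cyc_body xs) | xs i.
         2 \<le> length xs \<and> set xs \<subseteq> V \<and> hd xs = last xs \<and>
         (\<forall>j. Suc j < length xs \<longrightarrow> xs ! j \<noteq> xs ! Suc j) \<and> Suc i < length xs}
   \<union> {(Dpath u v, {Arr u v}) | u v. u \<in> V \<and> v \<in> V \<and> u \<noteq> v}
   \<union> {(Dpath u w, {Dpath u v, Arr v w}) | u v w.
         u \<in> V \<and> v \<in> V \<and> w \<in> V \<and> u \<noteq> v \<and> v \<noteq> w}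
   \<union> {(Ed u v, {Arr u v}) | u v. u \<in> V \<and> v \<in> V \<and> u \<noteq> v}
   \<union> {(Ed u v, {Arr v u}) | u v. u \<in> V \<and> v \<in> V \<and> u \<noteq> v}
   \<union> {(ctr (Noe {u, v}), {Ed u v}) | u v. u \<in> V \<and> v \<in> V \<and> u \<noteq> v}
   \<union> {(ctr (Indep {u, v} W), arr_body T) | u v W T p.
         u \<in> V \<and> v \<in> V \<and> u \<noteq> v \<and> W \<subseteq> V - {u, v} \<and> active_collider_tree V T p u v W}"

definition asm_csl :: "'v set \<Rightarrow> 'v sent set" where
  "asm_csl V = asm_ds V \<union>
     {Bp p W | p u v W. u \<in> V \<and> v \<in> V \<and> u \<noteq> v \<and> vpath V p u v \<and> W \<subseteq> V - {u, v}}"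

definition rules_csl :: "'v set \<Rightarrow> 'v \<Rightarrow> 'v \<Rightarrow> 'v set \<Rightarrow> ('v sent \<times> 'v sent set) set" where
  "rules_csl V x y Z = rules_ds V
     \<union> {(Indep {x, y} Z, {Bp p Z | p. vpath V p x y})}
     \<union> {(Ap p Z, arr_body T) | T p. active_collider_tree V T p x y Z}
     \<union> {(ctr (Indep {x, y} Z), {})}"

definition graph_of :: "'v set \<Rightarrow> 'v sent set \<Rightarrow> ('v \<times> 'v) set" where
  "graph_of V S = {(u, v). u \<in> V \<and> v \<in> V \<and> Arr u v \<in> S}"

end

theory Submission
  imports Defs
begin


definition walk :: "('v \<times> 'v) set \<Rightarrow> 'v list \<Rightarrow> bool" where
  "walk E xs \<longleftrightarrow> 2 \<le> length xs \<and> (\<forall>j. Suc j < length xs \<longrightarrow> (xs ! j, xs ! Suc j) \<in> E)"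

lemma trancl_walk: "(a, b) \<in> E\<^sup>+ \<Longrightarrow> \<exists>xs. walk E xs \<and> hd xs = a \<and> last xs = b"
proof (induction rule: trancl_induct)
  case (base c)
  then show ?case by (intro exI[of _ "[a, c]"]) (auto simp: walk_def less_Suc_eq nth_Cons split: nat.splits)
next
  case (step c d)
  then obtain xs where xs: "walk E xs" "hd xs = a" "last xs = c" by blast
  have "walk E (xs @ [d])"
    unfolding walk_def
  proof (intro conjI allI impI)
    show "2 \<le> length (xs @ [d])" using xs(1) by (simp add: walk_def)
    fix j assume j: "Suc j < length (xs @ [d])"
    show "((xs @ [d]) ! j, (xs @ [d]) ! Suc j) \<in> E"
    proof (cases "Suc j < length xs")
      case True then show ?thesis using xs(1) by (simp add: walk_def nth_append)
    next
      case False
      then have "Suc j = length xs" using j by simp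
      then have "xs ! j = last xs" using xs(1) by (simp add: walk_def last_conv_nth) (metis diff_Suc_1 last_conv_nth list.size(3) nat.distinct(1))
      then show ?thesis using \<open>Suc j = length xs\<close> step xs by (simp add: nth_append)
    qed
  qed
  moreover have "xs \<noteq> []" using xs(1) by (auto simp: walk_def)
  ultimately show ?case using xs step by (intro exI[of _ "xs @ [d]"]) auto
qed

lemma walk_trancl_aux: "\<forall>xs. length xs = n + 2 \<longrightarrow> walk E xs \<longrightarrow> (hd xs, last xs) \<in> E\<^sup>+"
proof (induction n)
  case 0
  show ?case
  proof (intro allI impI)
    fix xs :: "'a list" assume "length xs = 0 + 2" "walk E xs"
    then obtain a b where "xs = [a, b]"
      by (metis (no_types, lifting) One_nat_def Suc_1 add_0 length_0_conv length_Suc_conv)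
    then show "(hd xs, last xs) \<in> E\<^sup>+" using \<open>walk E xs\<close> by (auto simp: walk_def)
  qed
next
  case (Suc n)
  show ?case
  proof (intro allI impI)
    fix xs :: "'a list" assume l: "length xs = Suc n + 2" and w: "walk E xs"
    obtain ys d where ys: "xs = ys @ [d]" using l by (metis length_0_conv nat.distinct(1) add_Suc rev_exhaust)
    have ly: "length ys = n + 2" using l ys by simp
    have wy: "walk E ys" unfolding walk_def
    proof (intro conjI allI impI)
      show "2 \<le> length ys" using ly by simp
      fix j assume j: "Suc j < length ys"
      have "(xs ! j, xs ! Suc j) \<in> E" using w j ys by (simp add: walk_def)
      then show "(ys ! j, ys ! Suc j) \<in> E" using j ys by (simp add: nth_append)
    qed
    have "(hd ys, last ys) \<in> E\<^sup>+" using Suc wy ly by blast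
    moreover have "(last ys, d) \<in> E"
    proof -
      have "(xs ! (n+1), xs ! Suc (n+1)) \<in> E" using w l by (simp add: walk_def)
      moreover have "xs ! (n+1) = last ys"
      proof -
        have "ys \<noteq> []" using ly by auto
        then have "last ys = ys ! (length ys - 1)" by (rule last_conv_nth)
        then show ?thesis using ys ly by (simp add: nth_append)
      qed
      moreover have "xs ! Suc (n+1) = d" using ys ly by (simp add: nth_append)
      ultimately show ?thesis by simp
    qed
    moreover have "ys \<noteq> []" using ly by auto
    ultimately show "(hd xs, last xs) \<in> E\<^sup>+" using ys
      by (simp add: hd_append2 trancl_into_trancl)
  qed
qed

lemma walk_trancl: "walk E xs \<Longrightarrow> (hd xs, last xs) \<in> E\<^sup>+"
  using walk_trancl_aux[of "length xs - 2" E] by (auto simp: walk_def)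

lemma acyclic_antisym: "acyclic E \<Longrightarrow> (a, b) \<in> E \<Longrightarrow> (b, a) \<notin> E"
  by (meson acyclic_def r_into_trancl' trancl_into_trancl)

lemma coll_mono:
  assumes "E \<subseteq> E'" "acyclic E'" "is_path E p u v"
  shows "collider E' p i \<longleftrightarrow> collider E p i"
proof
  assume c: "collider E' p i"
  have i: "0 < i" "Suc i < length p" using c by (auto simp: collider_def)
  have a1: "adj E (p ! (i - 1)) (p ! i)" using assms(3) i unfolding is_path_def
    by (metis Suc_diff_1 Suc_lessD)
  have a2: "adj E (p ! i) (p ! Suc i)" using assms(3) i unfolding is_path_def by blast
  show "collider E p i"
    using a1 a2 c assms(1) acyclic_antisym[OF assms(2)] unfolding collider_def adj_def by blast
next
  assume "collider E p i" then show "collider E' p i" using assms(1) unfolding collider_def by blast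
qed

lemma path_mono:
  assumes "E \<subseteq> E'" "acyclic E'" "is_path E p u v" "active E p W"
  shows "is_path E' p u v \<and> active E' p W"
proof
  show "is_path E' p u v" using assms(1,3) unfolding is_path_def adj_def by blast
  have "E\<^sup>+ \<subseteq> E'\<^sup>+" using assms(1) by (auto intro: trancl_mono)
  then show "active E' p W" using assms(4) coll_mono[OF assms(1-3)] unfolding active_def by blast
qed


lemma tree_of_path:
  assumes acy: "acyclic E" and EV: "E \<subseteq> V \<times> V" and pth: "is_path E p u v" and act: "active E p W"
  shows "\<exists>T \<subseteq> E. active_collider_tree V T p u v W"
proof -
  define P where "P = {(s,t) \<in> E. \<exists>i. Suc i < length p \<and> ((s,t) = (p!i, p!Suc i) \<or> (s,t) = (p!Suc i, p!i))}"
  define D where "D = {(s,t) \<in> E. \<exists>i. collider E p i \<and> (p!i, s) \<in> E\<^sup>* \<and> (\<exists>d\<in>W. (t,d) \<in> E\<^sup>*)}"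
  define T where "T = P \<union> D"
  have TE: "T \<subseteq> E" unfolding T_def P_def D_def by blast
  have adjT: "adj T (p!i) (p!Suc i)" if "Suc i < length p" for i
  proof -
    have "adj E (p!i) (p!Suc i)" using pth that unfolding is_path_def by blast
    then show ?thesis using that unfolding adj_def T_def P_def by blast
  qed
  have pthT: "is_path T p u v" using pth adjT unfolding is_path_def by blast
  have collT: "collider T p i \<longleftrightarrow> collider E p i" for i
  proof
    assume "collider T p i" then show "collider E p i" using TE unfolding collider_def by blast
  next
    assume c: "collider E p i"
    then have i: "0 < i" "Suc i < length p" by (auto simp: collider_def)
    have "(p ! (i - 1), p ! i) \<in> P" using c i unfolding P_def collider_def
      by (smt (verit, ccfv_SIG) Suc_diff_1 Suc_lessD case_prodI mem_Collect_eq)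
    moreover have "(p ! Suc i, p ! i) \<in> P" using c i unfolding P_def collider_def by blast
    ultimately show "collider T p i" using c unfolding collider_def T_def by blast
  qed
  have reach: "(p!i, s) \<in> D\<^sup>*" if c: "collider E p i" and r: "(p!i, s) \<in> E\<^sup>*" and sd: "(s, d) \<in> E\<^sup>*" and dW: "d \<in> W" for i s d
  proof -
    have "(s, d) \<in> E\<^sup>* \<longrightarrow> (p!i, s) \<in> D\<^sup>*" using r
    proof (induction rule: rtrancl_induct)
      case base then show ?case by simp
    next
      case (step s1 s2)
      show ?case
      proof
        assume s2d: "(s2, d) \<in> E\<^sup>*"
        then have "(s1, d) \<in> E\<^sup>*" using step(2) by (meson converse_rtrancl_into_rtrancl)
        then have "(p!i, s1) \<in> D\<^sup>*" using step(3) by blast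
        moreover have "(s1, s2) \<in> D" using step(1,2) c s2d dW unfolding D_def by blast
        ultimately show "(p!i, s2) \<in> D\<^sup>*" by (rule rtrancl_into_rtrancl)
      qed
    qed
    then show ?thesis using sd by blast
  qed
  have DT: "D\<^sup>+ \<subseteq> T\<^sup>+" unfolding T_def by (auto intro: trancl_mono)
  have actT: "active T p W"
    unfolding active_def
  proof (intro allI impI)
    fix i assume i: "i < length p"
    show "(collider T p i \<longrightarrow> p ! i \<in> W \<or> (\<exists>d\<in>W. (p ! i, d) \<in> T\<^sup>+)) \<and> (\<not> collider T p i \<longrightarrow> p ! i \<notin> W)"
    proof (intro conjI)
    show "\<not> collider T p i \<longrightarrow> p ! i \<notin> W" using act i collT unfolding active_def by blast
    show "collider T p i \<longrightarrow> p ! i \<in> W \<or> (\<exists>d\<in>W. (p ! i, d) \<in> T\<^sup>+)"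
    proof
      assume cT: "collider T p i"
      then have c: "collider E p i" using collT by blast
      then have "p ! i \<in> W \<or> (\<exists>d\<in>W. (p ! i, d) \<in> E\<^sup>+)" using act i unfolding active_def by blast
      then show "p ! i \<in> W \<or> (\<exists>d\<in>W. (p ! i, d) \<in> T\<^sup>+)"
      proof
        assume "\<exists>d\<in>W. (p ! i, d) \<in> E\<^sup>+"
        then obtain d where d: "d \<in> W" "(p ! i, d) \<in> E\<^sup>+" by blast
        then obtain s where s: "(p!i, s) \<in> E\<^sup>*" "(s, d) \<in> E" using tranclD2 by metis
        have "(p!i, s) \<in> D\<^sup>*" using reach[OF c s(1), of d] s(2) d(1) by blast
        moreover have "(s, d) \<in> D" using s c d(1) unfolding D_def by blast
        ultimately have "(p!i, d) \<in> D\<^sup>+" by (rule rtrancl_into_trancl1)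
        then show ?thesis using DT d(1) by blast
      qed simp
    qed
    qed
  qed
  have fld: "\<exists>i. collider T p i \<and> (p ! i, n) \<in> T\<^sup>+" if n: "n \<in> Field T" "n \<notin> set p" for n
  proof -
    have np: "(n, t) \<notin> P" "(s, n) \<notin> P" for s t using n(2) unfolding P_def by (auto simp: Suc_lessD)
    from n(1) obtain m where "(n, m) \<in> D \<or> (m, n) \<in> D"
      unfolding Field_def T_def using np by blast
    then show ?thesis
    proof
      assume nm: "(n, m) \<in> D"
      then obtain i d where c: "collider E p i" "(p!i, n) \<in> E\<^sup>*" "d \<in> W" "(m, d) \<in> E\<^sup>*" unfolding D_def by blast
      have "(n, d) \<in> E\<^sup>*" using nm c(4) unfolding D_def by (blast intro: converse_rtrancl_into_rtrancl)
      then have "(p!i, n) \<in> D\<^sup>*" using reach[OF c(1,2)] c(3) by blast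
      moreover have "p ! i \<noteq> n" using n(2) c(1) unfolding collider_def by auto
      ultimately have "(p!i, n) \<in> D\<^sup>+" by (meson rtranclD)
      then show ?thesis using c(1) collT DT by blast
    next
      assume mn: "(m, n) \<in> D"
      then obtain i d where c: "collider E p i" "(p!i, m) \<in> E\<^sup>*" "d \<in> W" "(n, d) \<in> E\<^sup>*" unfolding D_def by blast
      have "(m, d) \<in> E\<^sup>*" using mn c(4) unfolding D_def by (blast intro: converse_rtrancl_into_rtrancl)
      then have "(p!i, m) \<in> D\<^sup>*" using reach[OF c(1,2)] c(3) by blast
      then have "(p!i, n) \<in> D\<^sup>+" using mn by (rule rtrancl_into_trancl1)
      then show ?thesis using c(1) collT DT by blast
    qed
  qed
  have "collider_tree V T p u v"
    unfolding collider_tree_def using acy EV TE pthT fld by blast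
  then show ?thesis using TE actT unfolding active_collider_tree_def by blast
qed

lemma coll_rev:
  assumes "i < length p"
  shows "collider E (rev p) i \<longleftrightarrow> collider E p (length p - Suc i)"
proof -
  have a: "rev p ! i = p ! (length p - Suc i)" using assms by (simp add: rev_nth)
  show ?thesis
  proof (cases "0 < i \<and> Suc i < length p")
    case True
    have "i - 1 < length p" using True by arith
    then have b0: "rev p ! (i - 1) = p ! (length p - Suc (i - 1))" by (rule rev_nth)
    have b1: "length p - Suc (i - 1) = Suc (length p - Suc i)" using True by arith
    have b: "rev p ! (i - 1) = p ! Suc (length p - Suc i)" using b0 b1 by metis
    have c: "rev p ! Suc i = p ! (length p - Suc i - 1)" using True by (simp add: rev_nth)
    have d: "length p - Suc i - 1 = length p - Suc (Suc i)" by simp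
    show ?thesis unfolding collider_def using True a b c d
      by (auto simp: Suc_diff_Suc)
  next
    case False
    then show ?thesis unfolding collider_def using assms by auto
  qed
qed

lemma path_rev:
  assumes "is_path E p u v" "active E p W"
  shows "is_path E (rev p) v u \<and> active E (rev p) W"
proof
  show "is_path E (rev p) v u"
    unfolding is_path_def
  proof (intro conjI allI impI)
    show "rev p \<noteq> []" "hd (rev p) = v" "last (rev p) = u" "distinct (rev p)"
      using assms(1) unfolding is_path_def by (auto simp: hd_rev last_rev)
    fix i assume i: "Suc i < length (rev p)"
    define k where "k = length p - Suc (Suc i)"
    have k: "Suc k < length p" "rev p ! i = p ! Suc k" "rev p ! Suc i = p ! k"
      using i unfolding k_def by (auto simp: rev_nth Suc_diff_Suc)
    have "adj E (p ! k) (p ! Suc k)" using assms(1) k(1) unfolding is_path_def by blast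
    then show "adj E (rev p ! i) (rev p ! Suc i)" using k unfolding adj_def by auto
  qed
  show "active E (rev p) W"
    unfolding active_def
  proof (intro allI impI)
    fix i assume i: "i < length (rev p)"
    have "length p - Suc i < length p" using i by simp
    then show "(collider E (rev p) i \<longrightarrow> rev p ! i \<in> W \<or> (\<exists>d\<in>W. (rev p ! i, d) \<in> E\<^sup>+)) \<and>
          (\<not> collider E (rev p) i \<longrightarrow> rev p ! i \<notin> W)"
      using assms(2) coll_rev[of i p E] i unfolding active_def by (simp add: rev_nth)
  qed
qed

lemma dsep_sym: "d_separated E a b X \<Longrightarrow> d_separated E b a X"
  unfolding d_separated_def using path_rev by fastforce



locale csl =
  fixes V :: "'v set" and x y :: 'v and Z :: "'v set"
  assumes finV: "finite V" and xV: "x \<in> V" and yV: "y \<in> V" and xy: "x \<noteq> y"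
    and ZV: "Z \<subseteq> V - {x, y}"
begin

abbreviation "R \<equiv> rules_csl V x y Z"
abbreviation "A \<equiv> asm_csl V"

lemma head_Arr: "(Arr u v, B) \<notin> R"
  by (auto simp: rules_csl_def rules_ds_def)

lemma head_Noe: "(Noe s, B) \<notin> R"
  by (auto simp: rules_csl_def rules_ds_def)

lemma head_Bp: "(Bp p W, B) \<notin> R"
  by (auto simp: rules_csl_def rules_ds_def)

lemma head_Ed: "(Ed u v, B) \<in> R \<Longrightarrow> B = {Arr u v} \<or> B = {Arr v u}"
  by (auto simp: rules_csl_def rules_ds_def)

lemma cyc_in: "Suc i < length xs \<Longrightarrow> Arr (xs ! i) (xs ! Suc i) \<in> cyc_body xs"
  by (auto simp: cyc_body_def)

lemma head_CtrArr: "(Ctr (Arr u v), B) \<in> R \<Longrightarrow>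
   B = {Arr v u} \<or> B = {Noe {u, v}} \<or> (\<exists>xs. B = cyc_body xs \<and> 2 \<le> length xs \<and> hd xs = last xs \<and> Arr u v \<in> B)"
proof -
  assume h: "(Ctr (Arr u v), B) \<in> R"
  then have "(Ctr (Arr u v), B) \<in> rules_ds V" by (auto simp: rules_csl_def)
  then have "(\<exists>a b u' v'. u' \<in> V \<and> v' \<in> V \<and> u' \<noteq> v' \<and>
         a \<in> {Arr u' v', Arr v' u', Noe {u', v'}} \<and> b \<in> {Arr u' v', Arr v' u', Noe {u', v'}} \<and> a \<noteq> b
         \<and> Ctr (Arr u v) = ctr a \<and> B = {b}) \<or>
      (\<exists>xs i. Ctr (Arr u v) = ctr (Arr (xs ! i) (xs ! Suc i)) \<and> B = cyc_body xs \<and>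
         2 \<le> length xs \<and> hd xs = last xs \<and> Suc i < length xs)"
    unfolding rules_ds_def by (simp only: Un_iff mem_Collect_eq Pair_inject) (elim disjE; simp; blast)
  then show ?thesis
  proof
    assume "\<exists>a b u' v'. u' \<in> V \<and> v' \<in> V \<and> u' \<noteq> v' \<and>
         a \<in> {Arr u' v', Arr v' u', Noe {u', v'}} \<and> b \<in> {Arr u' v', Arr v' u', Noe {u', v'}} \<and> a \<noteq> b
         \<and> Ctr (Arr u v) = ctr a \<and> B = {b}"
    then show ?thesis by (auto simp: insert_commute)
  next
    assume "\<exists>xs i. Ctr (Arr u v) = ctr (Arr (xs ! i) (xs ! Suc i)) \<and> B = cyc_body xs \<and>
         2 \<le> length xs \<and> hd xs = last xs \<and> Suc i < length xs"
    then show ?thesis using cyc_in by fastforce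
  qed
qed

lemma cyc_body_range: "cyc_body xs \<subseteq> range (\<lambda>(s,t). Arr s t)"
  by (auto simp: cyc_body_def)

lemma head_CtrNoe: "(Ctr (Noe s), B) \<in> R \<Longrightarrow>
   \<exists>u v. s = {u, v} \<and> (B = {Arr u v} \<or> B = {Arr v u} \<or> B = {Ed u v})"
  by (auto simp: rules_csl_def rules_ds_def) blast+

lemma head_CtrIndep: "(Ctr (Indep s W), B) \<in> R \<Longrightarrow>
   (s = {x, y} \<and> W = Z \<and> B = {}) \<or>
   (\<exists>u v T p. s = {u, v} \<and> active_collider_tree V T p u v W \<and> B = arr_body T)"
  by (auto simp: rules_csl_def rules_ds_def)

lemma head_Ap: "(Ap p W, B) \<in> R \<Longrightarrow>
   W = Z \<and> (\<exists>T. active_collider_tree V T p x y Z \<and> B = arr_body T)"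
  by (auto simp: rules_csl_def rules_ds_def)

lemma head_Indep: "(Indep s W, B) \<in> R \<Longrightarrow>
   s = {x, y} \<and> W = Z \<and> B = {Bp p Z | p. vpath V p x y}"
  by (auto simp: rules_csl_def rules_ds_def)

lemma notA[simp]: "Ctr a \<notin> A" "Ed u v \<notin> A" "Ap p W \<notin> A" "Dpath u v \<notin> A"
  by (auto simp: asm_csl_def asm_ds_def)

lemma der_leaf: "derives R A S' q \<Longrightarrow> (\<And>B. (q, B) \<notin> R) \<Longrightarrow> S' = {q}"
  by (erule derives.cases) auto

lemma der_Arr: "derives R A S' (Arr u v) \<Longrightarrow> S' = {Arr u v}"
  using der_leaf head_Arr by blast

lemma der_Noe: "derives R A S' (Noe s) \<Longrightarrow> S' = {Noe s}"
  using der_leaf head_Noe by blast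

lemma der_Bp: "derives R A S' (Bp p W) \<Longrightarrow> S' = {Bp p W}"
  using der_leaf head_Bp by blast

lemma UN_arr: "(\<forall>b\<in>B. derives R A (f b) b) \<Longrightarrow> B \<subseteq> range (\<lambda>(s,t). Arr s t) \<Longrightarrow> (\<Union>b\<in>B. f b) = B"
proof -
  assume a: "\<forall>b\<in>B. derives R A (f b) b" and b: "B \<subseteq> range (\<lambda>(s,t). Arr s t)"
  have "\<forall>b\<in>B. f b = {b}" using a b der_Arr by fastforce
  then show ?thesis by auto
qed

lemma arr_body_range: "arr_body T \<subseteq> range (\<lambda>(s,t). Arr s t)"
  by (auto simp: arr_body_def)

lemma der_Ed: "derives R A S' (Ed u v) \<Longrightarrow> S' = {Arr u v} \<or> S' = {Arr v u}"
proof (erule derives.cases)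
  fix h B f assume "Ed u v = h" "S' = (\<Union>b\<in>B. f b)" "(h, B) \<in> R" "\<forall>b\<in>B. derives R A (f b) b"
  then show ?thesis using head_Ed[of u v B] UN_arr[of B f] by auto
qed auto

lemma der_CtrArr: "derives R A S' (Ctr (Arr u v)) \<Longrightarrow>
   S' = {Arr v u} \<or> S' = {Noe {u, v}} \<or> (\<exists>xs. S' = cyc_body xs \<and> 2 \<le> length xs \<and> hd xs = last xs \<and> Arr u v \<in> S')"
proof (erule derives.cases)
  fix h B f assume h: "Ctr (Arr u v) = h" "S' = (\<Union>b\<in>B. f b)" "(h, B) \<in> R" "\<forall>b\<in>B. derives R A (f b) b"
  from h head_CtrArr[of u v B] have "B = {Arr v u} \<or> B = {Noe {u, v}} \<or> (\<exists>xs. B = cyc_body xs \<and> 2 \<le> length xs \<and> hd xs = last xs \<and> Arr u v \<in> B)" by simp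
  then show ?thesis
  proof (elim disjE)
    assume "B = {Arr v u}" then show ?thesis using h der_Arr by auto
  next
    assume "B = {Noe {u, v}}" then show ?thesis using h der_Noe by auto
  next
    assume "\<exists>xs. B = cyc_body xs \<and> 2 \<le> length xs \<and> hd xs = last xs \<and> Arr u v \<in> B"
    then obtain xs where "B = cyc_body xs" "2 \<le> length xs" "hd xs = last xs" "Arr u v \<in> B" by blast
    then show ?thesis using h UN_arr[of B f] cyc_body_range[of xs] by auto
  qed
qed auto

lemma der_CtrNoe: "derives R A S' (Ctr (Noe s)) \<Longrightarrow>
   \<exists>u v. s = {u, v} \<and> (S' = {Arr u v} \<or> S' = {Arr v u})"
proof (erule derives.cases)
  fix h B f assume h: "Ctr (Noe s) = h" "S' = (\<Union>b\<in>B. f b)" "(h, B) \<in> R" "\<forall>b\<in>B. derives R A (f b) b"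
  from h head_CtrNoe[of s B] obtain u v where uv: "s = {u, v}" "B = {Arr u v} \<or> B = {Arr v u} \<or> B = {Ed u v}" by auto
  from uv(2) show ?thesis
  proof (elim disjE)
    assume "B = {Arr u v}" then show ?thesis using h uv der_Arr[of "f (Arr u v)" u v] by auto
  next
    assume "B = {Arr v u}" then show ?thesis using h uv der_Arr[of "f (Arr v u)" v u] by auto
  next
    assume "B = {Ed u v}" then show ?thesis using h uv der_Ed[of "f (Ed u v)" u v] by auto
  qed
qed auto

lemma der_CtrIndep: "derives R A S' (Ctr (Indep s W)) \<Longrightarrow>
   (s = {x, y} \<and> W = Z \<and> S' = {}) \<or>
   (\<exists>u v T p. s = {u, v} \<and> active_collider_tree V T p u v W \<and> S' = arr_body T)"
proof (erule derives.cases)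
  fix h B f assume h: "Ctr (Indep s W) = h" "S' = (\<Union>b\<in>B. f b)" "(h, B) \<in> R" "\<forall>b\<in>B. derives R A (f b) b"
  from h head_CtrIndep[of s W B] have "(s = {x, y} \<and> W = Z \<and> B = {}) \<or>
   (\<exists>u v T p. s = {u, v} \<and> active_collider_tree V T p u v W \<and> B = arr_body T)" by simp
  then show ?thesis
  proof (elim disjE)
    assume "s = {x, y} \<and> W = Z \<and> B = {}" then show ?thesis using h by auto
  next
    assume "\<exists>u v T p. s = {u, v} \<and> active_collider_tree V T p u v W \<and> B = arr_body T"
    then obtain u v T p where "s = {u, v}" "active_collider_tree V T p u v W" "B = arr_body T" by blast
    then show ?thesis using h UN_arr[of B f] arr_body_range[of T] by blast
  qed
qed auto

lemma der_Ap: "derives R A S' (Ap p W) \<Longrightarrow>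
   W = Z \<and> (\<exists>T. active_collider_tree V T p x y Z \<and> S' = arr_body T)"
proof (erule derives.cases)
  fix h B f assume h: "Ap p W = h" "S' = (\<Union>b\<in>B. f b)" "(h, B) \<in> R" "\<forall>b\<in>B. derives R A (f b) b"
  from h head_Ap[of p W B] obtain T where "W = Z" "active_collider_tree V T p x y Z" "B = arr_body T" by auto
  then show ?thesis using h UN_arr[of B f] arr_body_range[of T] by blast
qed auto

lemma der_Indep: "derives R A S' (Indep s W) \<Longrightarrow>
   S' = {Indep s W} \<or> (s = {x, y} \<and> W = Z \<and> {Bp p Z | p. vpath V p x y} \<subseteq> S')"
proof (erule derives.cases)
  fix h B f assume h: "Indep s W = h" "S' = (\<Union>b\<in>B. f b)" "(h, B) \<in> R" "\<forall>b\<in>B. derives R A (f b) b"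
  from h head_Indep[of s W B] have hh: "s = {x, y}" "W = Z" "B = {Bp p Z | p. vpath V p x y}" by auto
  have "\<forall>b\<in>B. f b = {b}"
  proof
    fix b assume "b \<in> B"
    then obtain p where "b = Bp p Z" using hh by auto
    then show "f b = {b}" using h(4) \<open>b \<in> B\<close> der_Bp by blast
  qed
  then show ?thesis using h hh by auto
qed auto

fun an_sent :: "'v sent \<Rightarrow> bool" where
  "an_sent (Arr u v) = True"
| "an_sent (Noe s) = True"
| "an_sent _ = False"

lemma body_ok: "(h, B) \<in> R \<Longrightarrow> (\<forall>s W. h \<noteq> Indep s W) \<Longrightarrow> b \<in> B \<Longrightarrow>
   (\<forall>s W. b \<noteq> Indep s W) \<and> (\<forall>p W. b \<noteq> Bp p W)"
  by (auto simp: rules_csl_def rules_ds_def cyc_body_def arr_body_def)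

lemma asm_cases: "a \<in> A \<Longrightarrow> an_sent a \<or> (\<exists>s W. a = Indep s W) \<or> (\<exists>p W. a = Bp p W)"
  by (auto simp: asm_csl_def asm_ds_def)

lemma der_an: "derives R A S' q \<Longrightarrow> (\<forall>s W. q \<noteq> Indep s W) \<Longrightarrow> (\<forall>p W. q \<noteq> Bp p W) \<Longrightarrow>
   \<forall>s\<in>S'. an_sent s"
proof (induction rule: derives.induct)
  case (leaf a)
  then show ?case using asm_cases[of a] by auto
next
  case (rule h B f)
  then show ?case using body_ok[of h B] by blast
qed

end


lemma walk_set: "walk E xs \<Longrightarrow> E \<subseteq> V \<times> V \<Longrightarrow> set xs \<subseteq> V"
proof
  fix z assume w: "walk E xs" and EV: "E \<subseteq> V \<times> V" and z: "z \<in> set xs"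
  then obtain k where k: "k < length xs" "xs ! k = z" by (auto simp: in_set_conv_nth)
  show "z \<in> V"
  proof (cases "Suc k < length xs")
    case True
    then have "(xs ! k, xs ! Suc k) \<in> E" using w by (auto simp: walk_def)
    then show ?thesis using EV k by auto
  next
    case False
    then have "Suc (k - 1) < length xs" "Suc (k - 1) = k" using k w by (auto simp: walk_def)
    then have "(xs ! (k - 1), xs ! k) \<in> E" using w by (metis walk_def)
    then show ?thesis using EV k by auto
  qed
qed

lemma walk_cyc_sub: "walk E xs \<Longrightarrow> cyc_body xs \<subseteq> {Arr s t | s t. (s, t) \<in> E}"
  by (auto simp: walk_def cyc_body_def)

lemma cyc_walk: "2 \<le> length xs \<Longrightarrow> cyc_body xs \<subseteq> {Arr s t | s t. (s, t) \<in> E} \<Longrightarrow> walk E xs"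
  unfolding walk_def cyc_body_def by blast

lemma finite_cyc: "finite (cyc_body xs)"
proof -
  have "cyc_body xs = (\<lambda>j. Arr (xs ! j) (xs ! Suc j)) ` {j. Suc j < length xs}"
    by (auto simp: cyc_body_def)
  moreover have "finite {j. Suc j < length xs}"
    by (rule finite_subset[of _ "{..<length xs}"]) auto
  ultimately show ?thesis by simp
qed

lemma arr_body_img: "arr_body T = (\<lambda>(s,t). Arr s t) ` T"
  by (auto simp: arr_body_def)

lemma att_intro: "S' \<subseteq> S \<Longrightarrow> a \<in> T \<Longrightarrow> derives R A S' (c a) \<Longrightarrow> attacks R A c S T"
  unfolding attacks_def by blast

lemma att_mono: "attacks R A c S T \<Longrightarrow> S \<subseteq> S2 \<Longrightarrow> T \<subseteq> T2 \<Longrightarrow> attacks R A c S2 T2"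
  unfolding attacks_def by blast

lemma complete_of_stable:
  assumes SA: "S \<subseteq> A" and cf: "conflict_free R A c S" and st: "\<forall>a\<in>A - S. attacks R A c S {a}"
  shows "complete_ext R A c S"
proof -
  have def: "defends R A c S S"
    unfolding defends_def
  proof (intro allI impI)
    fix U assume U: "U \<subseteq> A" "attacks R A c U S"
    then obtain U' a where U': "U' \<subseteq> U" "a \<in> S" "derives R A U' (c a)" unfolding attacks_def by blast
    show "attacks R A c S U"
    proof (cases "U' \<subseteq> S")
      case True
      then have "attacks R A c S S" using U' by (blast intro: att_intro)
      then show ?thesis using cf by (simp add: conflict_free_def)
    next
      case False
      then obtain u where "u \<in> U'" "u \<notin> S" by blast
      then have "attacks R A c S {u}" using st U U' by blast
      then show ?thesis using \<open>u \<in> U'\<close> U' by (auto intro: att_mono)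
    qed
  qed
  have "T \<subseteq> S" if T: "T \<subseteq> A" "defends R A c S T" for T
  proof
    fix t assume t: "t \<in> T"
    show "t \<in> S"
    proof (rule ccontr)
      assume "t \<notin> S"
      then have "attacks R A c S {t}" using st T t by blast
      then have "attacks R A c S T" using t by (auto intro: att_mono)
      then have "attacks R A c S S" using T SA unfolding defends_def by blast
      then show False using cf by (simp add: conflict_free_def)
    qed
  qed
  then show ?thesis using SA cf def unfolding complete_ext_def admissible_def by blast
qed

context csl
begin

lemma r_i: "u \<in> V \<Longrightarrow> v \<in> V \<Longrightarrow> u \<noteq> v \<Longrightarrow> a \<in> {Arr u v, Arr v u, Noe {u, v}} \<Longrightarrow>
   b \<in> {Arr u v, Arr v u, Noe {u, v}} \<Longrightarrow> a \<noteq> b \<Longrightarrow> (ctr a, {b}) \<in> R"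
  unfolding rules_csl_def rules_ds_def
  apply (rule UnI1)+
  apply (rule CollectI)
  apply (rule exI[of _ a], rule exI[of _ b], rule exI[of _ u], rule exI[of _ v])
  apply simp
  done

lemma r_cyc: "2 \<le> length xs \<Longrightarrow> set xs \<subseteq> V \<Longrightarrow> hd xs = last xs \<Longrightarrow>
   (\<forall>j. Suc j < length xs \<longrightarrow> xs ! j \<noteq> xs ! Suc j) \<Longrightarrow> Suc i < length xs \<Longrightarrow>
   (Ctr (Arr (xs ! i) (xs ! Suc i)), cyc_body xs) \<in> R"
  unfolding rules_csl_def rules_ds_def
  apply (rule UnI1, rule UnI1, rule UnI1, rule UnI1, rule UnI1, rule UnI1, rule UnI1, rule UnI1, rule UnI1)
  apply (rule UnI2)
  apply (rule CollectI)
  apply (rule exI[of _ xs], rule exI[of _ i])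
  apply simp
  done

lemma r_indep: "u \<in> V \<Longrightarrow> v \<in> V \<Longrightarrow> u \<noteq> v \<Longrightarrow> W \<subseteq> V - {u, v} \<Longrightarrow>
   active_collider_tree V T p u v W \<Longrightarrow> (Ctr (Indep {u, v} W), arr_body T) \<in> R"
  unfolding rules_csl_def rules_ds_def
  apply (rule UnI1, rule UnI1, rule UnI1)
  apply (rule UnI2)
  apply (rule CollectI)
  apply (rule exI[of _ u], rule exI[of _ v], rule exI[of _ W], rule exI[of _ T], rule exI[of _ p])
  apply simp
  done

lemma r_ap: "active_collider_tree V T p x y Z \<Longrightarrow> (Ap p Z, arr_body T) \<in> R"
  unfolding rules_csl_def
  apply (rule UnI1, rule UnI2)
  apply (rule CollectI)
  apply (rule exI[of _ T], rule exI[of _ p])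
  apply simp
  done

lemma r_a: "(Indep {x, y} Z, {Bp p Z | p. vpath V p x y}) \<in> R"
  unfolding rules_csl_def by (rule UnI1, rule UnI1, rule UnI2) simp

lemma r_fact: "(Ctr (Indep {x, y} Z), {}) \<in> R"
  unfolding rules_csl_def by simp

lemma asm_Arr: "Arr u v \<in> A \<longleftrightarrow> u \<in> V \<and> v \<in> V \<and> u \<noteq> v"
  by (auto simp: asm_csl_def asm_ds_def)

lemma asm_Noe: "Noe s \<in> A \<longleftrightarrow> (\<exists>u v. s = {u, v} \<and> u \<in> V \<and> v \<in> V \<and> u \<noteq> v)"
  by (auto simp: asm_csl_def asm_ds_def)

lemma asm_Indep: "u \<in> V \<Longrightarrow> v \<in> V \<Longrightarrow> u \<noteq> v \<Longrightarrow> W \<subseteq> V - {u, v} \<Longrightarrow> Indep {u, v} W \<in> A"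
  unfolding asm_csl_def asm_ds_def by blast

lemma asm_Bp: "vpath V p x y \<Longrightarrow> Bp p Z \<in> A"
  using xV yV xy ZV unfolding asm_csl_def by blast

lemma der_body: "(h, B) \<in> R \<Longrightarrow> finite B \<Longrightarrow> B \<subseteq> A \<Longrightarrow> derives R A B h"
proof -
  assume a: "(h, B) \<in> R" "finite B" "B \<subseteq> A"
  have "derives R A (\<Union>b\<in>B. {b}) h"
    using a by (intro derives.rule) (auto intro: derives.leaf)
  then show ?thesis by simp
qed

lemma der_single: "(h, {b}) \<in> R \<Longrightarrow> b \<in> A \<Longrightarrow> derives R A {b} h"
  using der_body by simp

lemma tree_props:
  assumes "active_collider_tree V T p u v W"
  shows "T \<subseteq> V \<times> V" "acyclic T" "finite T" "arr_body T \<subseteq> A" "finite (arr_body T)"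
    "is_path T p u v" "active T p W"
proof -
  obtain H where H: "H \<subseteq> V \<times> V" "acyclic H" "T \<subseteq> H"
    using assms unfolding active_collider_tree_def collider_tree_def by blast
  show TV: "T \<subseteq> V \<times> V" using H by blast
  show ac: "acyclic T" using H acyclic_subset by blast
  show fT: "finite T" using TV finV finite_subset by blast
  have "s \<noteq> t" if "(s, t) \<in> T" for s t using ac that unfolding acyclic_def by blast
  then show "arr_body T \<subseteq> A" using TV by (auto simp: arr_body_def asm_Arr)
  show "finite (arr_body T)" using fT by (simp add: arr_body_img)
  show "is_path T p u v" "active T p W"
    using assms unfolding active_collider_tree_def collider_tree_def by blast+
qed

lemma finite_Bps: "finite {Bp p Z | p. vpath V p x y}"
proof -
  have "{Bp p Z | p. vpath V p x y} \<subseteq> (\<lambda>p. Bp p Z) ` {p. set p \<subseteq> V \<and> distinct p}"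
    by (auto simp: vpath_def)
  moreover have "finite {p. set p \<subseteq> V \<and> distinct p}" using finV by (rule finite_subset_distinct)
  ultimately show ?thesis using finite_subset by blast
qed

lemma graph_V: "graph_of V S \<subseteq> V \<times> V"
  by (auto simp: graph_of_def)

lemma cyc_derive:
  assumes w: "walk E xs" and hl: "hd xs = last xs" and EV: "E \<subseteq> V \<times> V"
    and irr: "\<And>s t. (s, t) \<in> E \<Longrightarrow> s \<noteq> t" and i: "Suc i < length xs"
  shows "derives R A (cyc_body xs) (Ctr (Arr (xs ! i) (xs ! Suc i)))"
proof (rule der_body)
  have l: "2 \<le> length xs" using w by (simp add: walk_def)
  have "\<forall>j. Suc j < length xs \<longrightarrow> xs ! j \<noteq> xs ! Suc j" using w irr by (auto simp: walk_def)
  then show "(Ctr (Arr (xs ! i) (xs ! Suc i)), cyc_body xs) \<in> R"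
    using r_cyc l walk_set[OF w EV] hl i by blast
  show "finite (cyc_body xs)" by (rule finite_cyc)
  show "cyc_body xs \<subseteq> A"
    using walk_cyc_sub[OF w] EV irr by (force simp: asm_Arr)
qed

lemma graph_acyclic:
  assumes SA: "S \<subseteq> A" and cf: "conflict_free R A ctr S"
  shows "acyclic (graph_of V S)"
  unfolding acyclic_def
proof (intro allI notI)
  fix w assume "(w, w) \<in> (graph_of V S)\<^sup>+"
  then obtain xs where xs: "walk (graph_of V S) xs" "hd xs = w" "last xs = w" using trancl_walk by metis
  have irr: "s \<noteq> t" if "(s, t) \<in> graph_of V S" for s t
    using that SA by (auto simp: graph_of_def asm_Arr)
  have l: "Suc 0 < length xs" using xs by (simp add: walk_def)
  have d: "derives R A (cyc_body xs) (Ctr (Arr (xs ! 0) (xs ! Suc 0)))"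
    using cyc_derive[OF xs(1) _ graph_V irr l] xs by simp
  have sub: "cyc_body xs \<subseteq> S" using walk_cyc_sub[OF xs(1)] by (auto simp: graph_of_def)
  have "Arr (xs ! 0) (xs ! Suc 0) \<in> S" using cyc_in[OF l] sub by blast
  then have "attacks R A ctr S S" using sub d by (intro att_intro[of _ _ "Arr (xs ! 0) (xs ! Suc 0)"]) auto
  then show False using cf by (simp add: conflict_free_def)
qed

lemma tree_graph: "active_collider_tree V T p u v W \<Longrightarrow> arr_body T \<subseteq> S \<Longrightarrow> T \<subseteq> graph_of V S"
proof
  fix e assume T: "active_collider_tree V T p u v W" "arr_body T \<subseteq> S" and e: "e \<in> T"
  obtain s t where st: "e = (s, t)" by (cases e)
  have "Arr s t \<in> S" using T(2) e st by (auto simp: arr_body_def)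
  moreover have "s \<in> V" "t \<in> V" using tree_props(1)[OF T(1)] e st by auto
  ultimately show "e \<in> graph_of V S" using st by (simp add: graph_of_def)
qed

lemma dir1:
  assumes SA: "S \<subseteq> A" and cf: "conflict_free R A ctr S"
    and ab: "a \<in> V" "b \<in> V" "a \<noteq> b" "X \<subseteq> V - {a, b}" and I: "Indep {a, b} X \<in> S"
  shows "d_separated (graph_of V S) a b X"
proof (rule ccontr)
  assume "\<not> d_separated (graph_of V S) a b X"
  then obtain p where p: "is_path (graph_of V S) p a b" "active (graph_of V S) p X"
    unfolding d_separated_def by blast
  obtain T where T: "T \<subseteq> graph_of V S" "active_collider_tree V T p a b X"
    using tree_of_path[OF graph_acyclic[OF SA cf] graph_V p] by blast
  have "derives R A (arr_body T) (Ctr (Indep {a, b} X))"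
    using der_body[OF r_indep[OF ab T(2)]] tree_props[OF T(2)] by blast
  moreover have "arr_body T \<subseteq> S" using T(1) by (auto simp: arr_body_def graph_of_def)
  ultimately have "attacks R A ctr S S" using I by (intro att_intro[of _ _ "Indep {a, b} X"]) auto
  then show False using cf by (simp add: conflict_free_def)
qed

lemma tree2path:
  assumes SA: "S \<subseteq> A" and cf: "conflict_free R A ctr S"
    and T: "active_collider_tree V T p u v W" "arr_body T \<subseteq> S"
  shows "\<not> d_separated (graph_of V S) u v W"
proof -
  have "is_path (graph_of V S) p u v \<and> active (graph_of V S) p W"
    using path_mono[OF tree_graph[OF T] graph_acyclic[OF SA cf]] tree_props[OF T(1)] by blast
  then show ?thesis unfolding d_separated_def by blast
qed

lemma dsep_pair: "{u, v} = {a, b} \<Longrightarrow> \<not> d_separated E u v W \<Longrightarrow> \<not> d_separated E a b W"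
  by (metis doubleton_eq_iff dsep_sym)

lemma core:
  assumes SA: "S \<subseteq> A" and cf: "conflict_free R A ctr S" and cl: "closed_set R A S"
    and st: "\<forall>a\<in>A - S. attacks R A ctr S {a}"
    and ab: "a \<in> V" "b \<in> V" "a \<noteq> b" "X \<subseteq> V - {a, b}"
  shows "Indep {a, b} X \<in> S \<longleftrightarrow> d_separated (graph_of V S) a b X"
proof
  assume "Indep {a, b} X \<in> S" then show "d_separated (graph_of V S) a b X" using dir1 SA cf ab by blast
next
  assume ds: "d_separated (graph_of V S) a b X"
  show "Indep {a, b} X \<in> S"
  proof (rule ccontr)
    assume nI: "Indep {a, b} X \<notin> S"
    then have "attacks R A ctr S {Indep {a, b} X}" using st asm_Indep[OF ab] by blast
    then obtain S' where S': "S' \<subseteq> S" "derives R A S' (Ctr (Indep {a, b} X))"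
      unfolding attacks_def by auto
    from der_CtrIndep[OF S'(2)] show False
    proof
      assume c: "{a, b} = {x, y} \<and> X = Z \<and> S' = {}"
      have "\<exists>p0. vpath V p0 x y \<and> Bp p0 Z \<notin> S"
      proof (rule ccontr)
        assume "\<not> (\<exists>p0. vpath V p0 x y \<and> Bp p0 Z \<notin> S)"
        then have sub: "{Bp p Z | p. vpath V p x y} \<subseteq> S" by blast
        have "derives R A {Bp p Z | p. vpath V p x y} (Indep {x, y} Z)"
          using der_body[OF r_a finite_Bps] asm_Bp by blast
        then have "Indep {x, y} Z \<in> S" using cl sub asm_Indep[OF xV yV xy ZV]
          unfolding closed_set_def by blast
        then show False using nI c by simp
      qed
      then obtain p0 where p0: "vpath V p0 x y" "Bp p0 Z \<notin> S" by blast
      then have "attacks R A ctr S {Bp p0 Z}" using st asm_Bp by blast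
      then obtain S'' where S'': "S'' \<subseteq> S" "derives R A S'' (Ap p0 Z)"
        unfolding attacks_def by auto
      then obtain T where T: "active_collider_tree V T p0 x y Z" "S'' = arr_body T"
        using der_Ap by blast
      have "\<not> d_separated (graph_of V S) x y Z" using tree2path[OF SA cf T(1)] T(2) S''(1) by simp
      then show False using ds c dsep_pair[of x y a b] by metis
    next
      assume "\<exists>u v T p. {a, b} = {u, v} \<and> active_collider_tree V T p u v X \<and> S' = arr_body T"
      then obtain u v T p where T: "{a, b} = {u, v}" "active_collider_tree V T p u v X" "S' = arr_body T"
        by blast
      have "\<not> d_separated (graph_of V S) u v X" using tree2path[OF SA cf T(2)] T(3) S'(1) by simp
      then show False using ds T(1) dsep_pair[of u v a b] by metis
    qed
  qed
qed

end


context csl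
begin

lemma pref_ext:
  assumes cl: "closed_set R A S" and co: "complete_ext R A ctr S"
  shows "\<exists>S2. closed_set R A S2 \<and> complete_ext R A ctr S2 \<and> S \<subseteq> S2 \<and> S2 \<subseteq> A \<and>
           conflict_free R A ctr S2 \<and> (\<forall>a\<in>A - S2. attacks R A ctr S2 {a})"
proof -
  have SA: "S \<subseteq> A" and cf: "conflict_free R A ctr S" and defS: "defends R A ctr S S"
    using co unfolding complete_ext_def admissible_def by blast+
  have ncf: "\<not> attacks R A ctr S S" using cf by (simp add: conflict_free_def)
  have "derives R A {} (Ctr (Indep {x, y} Z))" using der_body[OF r_fact] by simp
  then have nI: "Indep {x, y} Z \<notin> S" using ncf att_intro[of "{}" S "Indep {x, y} Z" S] by auto
  have "\<exists>p0. vpath V p0 x y \<and> Bp p0 Z \<notin> S"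
  proof (rule ccontr)
    assume "\<not> (\<exists>p0. vpath V p0 x y \<and> Bp p0 Z \<notin> S)"
    then have sub: "{Bp p Z | p. vpath V p x y} \<subseteq> S" by blast
    have "derives R A {Bp p Z | p. vpath V p x y} (Indep {x, y} Z)"
      using der_body[OF r_a finite_Bps] asm_Bp by blast
    then have "Indep {x, y} Z \<in> S" using cl sub asm_Indep[OF xV yV xy ZV]
      unfolding closed_set_def by blast
    then show False using nI by simp
  qed
  then obtain p0 where p0: "vpath V p0 x y" "Bp p0 Z \<notin> S" by blast
  have "\<not> defends R A ctr S {Bp p0 Z}"
    using co p0 asm_Bp unfolding complete_ext_def by blast
  then obtain U where U: "U \<subseteq> A" "attacks R A ctr U {Bp p0 Z}" "\<not> attacks R A ctr S U"
    unfolding defends_def by blast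
  then obtain U' where U': "U' \<subseteq> U" "derives R A U' (Ap p0 Z)" unfolding attacks_def by auto
  then obtain T where T: "active_collider_tree V T p0 x y Z" "U' = arr_body T" using der_Ap by blast
  note Tp = tree_props[OF T(1)]
  have noatt: "False" if "(s, t) \<in> T" "S' \<subseteq> S" "derives R A S' (Ctr (Arr s t))" for s t S'
  proof -
    have "Arr s t \<in> U" using that(1) T(2) U'(1) by (auto simp: arr_body_def)
    then have "attacks R A ctr S U" using that(2,3) by (intro att_intro[of S' S "Arr s t"]) auto
    then show False using U(3) by simp
  qed
  define G where "G = graph_of V S \<union> T"
  have GV: "G \<subseteq> V \<times> V" using graph_V Tp(1) unfolding G_def by blast
  have irr: "s \<noteq> t" if "(s, t) \<in> G" for s t
  proof -
    have "(s, t) \<in> graph_of V S \<Longrightarrow> s \<noteq> t" using SA by (auto simp: graph_of_def asm_Arr)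
    moreover have "(s, t) \<in> T \<Longrightarrow> s \<noteq> t" using Tp(2) unfolding acyclic_def by blast
    ultimately show ?thesis using that G_def by blast
  qed
  have noedge: "False" if e: "(s, t) \<in> G" "S' \<subseteq> S" "derives R A S' (Ctr (Arr s t))" for s t S'
  proof (cases "(s, t) \<in> T")
    case True then show False using noatt e by blast
  next
    case False
    then have st: "Arr s t \<in> S" "s \<in> V" "t \<in> V" "s \<noteq> t" using e(1) irr[OF e(1)] unfolding G_def by (auto simp: graph_of_def)
    from der_CtrArr[OF e(3)] show False
    proof (elim disjE)
      assume "S' = {Arr t s}"
      then show False using e st ncf att_intro[of S' S "Arr s t" S] by auto
    next
      assume n: "S' = {Noe {s, t}}"
      have "(ctr (Noe {s, t}), {Arr s t}) \<in> R" using r_i[of s t "Noe {s, t}" "Arr s t"] st by simp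
      then have "derives R A {Arr s t} (Ctr (Noe {s, t}))" using der_single st by (simp add: asm_Arr)
      then show False using e st n ncf att_intro[of "{Arr s t}" S "Noe {s, t}" S] by auto
    next
      assume "\<exists>xs. S' = cyc_body xs \<and> 2 \<le> length xs \<and> hd xs = last xs \<and> Arr s t \<in> S'"
      then show False using e st ncf att_intro[of S' S "Arr s t" S] by auto
    qed
  qed
  have acG: "acyclic G"
    unfolding acyclic_def
  proof (intro allI notI)
    fix w assume "(w, w) \<in> G\<^sup>+"
    then obtain xs where xs: "walk G xs" "hd xs = w" "last xs = w" using trancl_walk by metis
    show False
    proof (cases "\<forall>j. Suc j < length xs \<longrightarrow> (xs ! j, xs ! Suc j) \<in> T")
      case True
      then have "walk T xs" using xs(1) by (simp add: walk_def)
      then have "(w, w) \<in> T\<^sup>+" using walk_trancl xs by fastforce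
      then show False using Tp(2) unfolding acyclic_def by blast
    next
      case False
      then obtain j where j: "Suc j < length xs" "(xs ! j, xs ! Suc j) \<notin> T" by blast
      then have "(xs ! j, xs ! Suc j) \<in> graph_of V S" using xs(1) unfolding walk_def G_def by blast
      then have inS: "Arr (xs ! j) (xs ! Suc j) \<in> S" by (simp add: graph_of_def)
      have d: "derives R A (cyc_body xs) (Ctr (Arr (xs ! j) (xs ! Suc j)))"
        using cyc_derive[OF xs(1) _ GV irr j(1)] xs by simp
      have cA: "cyc_body xs \<subseteq> A" using walk_cyc_sub[OF xs(1)] GV irr by (force simp: asm_Arr)
      have "attacks R A ctr (cyc_body xs) S" using d inS by (intro att_intro[of _ _ "Arr (xs ! j) (xs ! Suc j)"]) auto
      then have "attacks R A ctr S (cyc_body xs)" using defS cA unfolding defends_def by blast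
      then obtain S' e where Se: "S' \<subseteq> S" "e \<in> cyc_body xs" "derives R A S' (ctr e)"
        unfolding attacks_def by blast
      then obtain s t where "e = Arr s t" "(s, t) \<in> G" using walk_cyc_sub[OF xs(1)] by blast
      then show False using noedge Se by auto
    qed
  qed
  define AG where "AG = {Arr s t | s t. (s, t) \<in> G} \<union>
     {Noe {u, v} | u v. u \<in> V \<and> v \<in> V \<and> u \<noteq> v \<and> (u, v) \<notin> G \<and> (v, u) \<notin> G}"
  define SG where "SG = {a \<in> A. \<not> attacks R A ctr AG {a}}"
  have AGA: "AG \<subseteq> A" unfolding AG_def using GV irr by (auto simp: asm_Arr asm_Noe; blast)
  have AG_arr: "Arr s t \<in> AG \<longleftrightarrow> (s, t) \<in> G" for s t unfolding AG_def by auto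
  have AG_noe: "(u, v) \<notin> G \<and> (v, u) \<notin> G" if "Noe {u, v} \<in> AG" for u v
  proof -
    have "Noe {u, v} \<in> {Noe {u, v} | u v. u \<in> V \<and> v \<in> V \<and> u \<noteq> v \<and> (u, v) \<notin> G \<and> (v, u) \<notin> G}"
      using that unfolding AG_def by blast
    then obtain u' v' where "Noe {u, v} = Noe {u', v'}" "(u', v') \<notin> G" "(v', u') \<notin> G"
      by blast
    then have "{u, v} = {u', v'}" "(u', v') \<notin> G" "(v', u') \<notin> G" by simp_all
    then show ?thesis by (auto simp: doubleton_eq_iff)
  qed
  have anti: "(t, s) \<notin> G" if "(s, t) \<in> G" for s t using acyclic_antisym[OF acG that] .
  have AGSG: "AG \<subseteq> SG"
  proof
    fix e assume e: "e \<in> AG"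
    show "e \<in> SG"
    proof (cases "\<exists>s t. e = Arr s t")
      case True
      then obtain s t where st: "e = Arr s t" "(s, t) \<in> G" using e AG_arr by blast
      have "\<not> attacks R A ctr AG {Arr s t}"
      proof
        assume "attacks R A ctr AG {Arr s t}"
        then obtain S' where S': "S' \<subseteq> AG" "derives R A S' (Ctr (Arr s t))" unfolding attacks_def by auto
        from der_CtrArr[OF S'(2)] show False
        proof (elim disjE)
          assume "S' = {Arr t s}" then show False using S'(1) AG_arr anti st by auto
        next
          assume "S' = {Noe {s, t}}" then show False using S'(1) AG_noe st by auto
        next
          assume "\<exists>xs. S' = cyc_body xs \<and> 2 \<le> length xs \<and> hd xs = last xs \<and> Arr s t \<in> S'"
          then obtain xs where xs: "S' = cyc_body xs" "2 \<le> length xs" "hd xs = last xs" by blast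
          have "cyc_body xs \<subseteq> {Arr s t | s t. (s, t) \<in> G}"
          proof
            fix e assume e: "e \<in> cyc_body xs"
            then obtain s' t' where "e = Arr s' t'" using e by (auto simp: cyc_body_def)
            moreover then have "(s', t') \<in> G" using AG_arr S'(1) xs(1) e by blast
            ultimately show "e \<in> {Arr s t | s t. (s, t) \<in> G}" by blast
          qed
          then have "walk G xs" using cyc_walk xs(2) by blast
          then have "(hd xs, last xs) \<in> G\<^sup>+" by (rule walk_trancl)
          then show False using acG xs(3) unfolding acyclic_def by simp
        qed
      qed
      then show ?thesis using st e AGA unfolding SG_def by blast
    next
      case False
      then obtain u v where uv: "e = Noe {u, v}" "(u, v) \<notin> G" "(v, u) \<notin> G"
        using e unfolding AG_def by auto
      have "\<not> attacks R A ctr AG {Noe {u, v}}"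
      proof
        assume "attacks R A ctr AG {Noe {u, v}}"
        then obtain S' where S': "S' \<subseteq> AG" "derives R A S' (Ctr (Noe {u, v}))" unfolding attacks_def by auto
        then obtain u' v' where "{u, v} = {u', v'}" "S' = {Arr u' v'} \<or> S' = {Arr v' u'}"
          using der_CtrNoe by blast
        then show False using S'(1) AG_arr uv by (auto simp: doubleton_eq_iff)
      qed
      then show ?thesis using uv e AGA unfolding SG_def by blast
    qed
  qed
  have SGA: "SG \<subseteq> A" unfolding SG_def by blast
  have arrSG: "(s, t) \<in> G" if "Arr s t \<in> SG" for s t
  proof -
    have st: "s \<in> V" "t \<in> V" "s \<noteq> t" using that SGA by (auto simp: asm_Arr)
    have na: "\<not> attacks R A ctr AG {Arr s t}" using that unfolding SG_def by blast
    have "Arr t s \<notin> AG"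
    proof
      assume a: "Arr t s \<in> AG"
      have "(ctr (Arr s t), {Arr t s}) \<in> R" using r_i[of s t "Arr s t" "Arr t s"] st by simp
      then have "derives R A {Arr t s} (Ctr (Arr s t))" using der_single st by (simp add: asm_Arr)
      then show False using na a att_intro[of "{Arr t s}" AG "Arr s t" "{Arr s t}"] by auto
    qed
    moreover have "Noe {s, t} \<notin> AG"
    proof
      assume a: "Noe {s, t} \<in> AG"
      have "(ctr (Arr s t), {Noe {s, t}}) \<in> R" using r_i[of s t "Arr s t" "Noe {s, t}"] st by simp
      then have "derives R A {Noe {s, t}} (Ctr (Arr s t))" using der_single[of "Ctr (Arr s t)" "Noe {s, t}"] asm_Noe[of "{s, t}"] st by auto
      then show False using na a att_intro[of "{Noe {s, t}}" AG "Arr s t" "{Arr s t}"] by auto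
    qed
    ultimately show ?thesis using st AG_arr unfolding AG_def by blast
  qed
  have noeSG: "Noe s \<in> AG" if nS: "Noe s \<in> SG" for s
  proof -
    obtain u v where uv: "s = {u, v}" "u \<in> V" "v \<in> V" "u \<noteq> v" using nS SGA asm_Noe[of s] by blast
    have na: "\<not> attacks R A ctr AG {Noe {u, v}}" using that uv unfolding SG_def by blast
    have "(u, v) \<notin> G"
    proof
      assume "(u, v) \<in> G"
      then have a: "Arr u v \<in> AG" using AG_arr by blast
      have "(ctr (Noe {u, v}), {Arr u v}) \<in> R" using r_i[of u v "Noe {u, v}" "Arr u v"] uv by simp
      then have "derives R A {Arr u v} (Ctr (Noe {u, v}))" using der_single uv by (simp add: asm_Arr)
      then show False using na a att_intro[of "{Arr u v}" AG "Noe {u, v}" "{Noe {u, v}}"] by auto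
    qed
    moreover have "(v, u) \<notin> G"
    proof
      assume "(v, u) \<in> G"
      then have a: "Arr v u \<in> AG" using AG_arr by blast
      have "(ctr (Noe {u, v}), {Arr v u}) \<in> R" using r_i[of u v "Noe {u, v}" "Arr v u"] uv by simp
      then have "derives R A {Arr v u} (Ctr (Noe {u, v}))" using der_single uv by (simp add: asm_Arr)
      then show False using na a att_intro[of "{Arr v u}" AG "Noe {u, v}" "{Noe {u, v}}"] by auto
    qed
    ultimately show ?thesis using uv unfolding AG_def by blast
  qed
  have cfSG: "conflict_free R A ctr SG"
    unfolding conflict_free_def
  proof
    assume "attacks R A ctr SG SG"
    then obtain S' a where Sa: "S' \<subseteq> SG" "a \<in> SG" "derives R A S' (ctr a)" unfolding attacks_def by blast
    have "\<forall>s W. ctr a \<noteq> Indep s W" "\<forall>p W. ctr a \<noteq> Bp p W" by (cases a; simp)+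
    then have an: "\<forall>s\<in>S'. an_sent s" using der_an Sa(3) by blast
    have "S' \<subseteq> AG"
    proof
      fix s assume s: "s \<in> S'"
      then have "an_sent s" using an by blast
      then show "s \<in> AG"
      proof (cases s)
        case (Arr u v) then show ?thesis using arrSG AG_arr s Sa(1) by blast
      next
        case (Noe t) then show ?thesis using noeSG s Sa(1) by blast
      qed auto
    qed
    then have "attacks R A ctr AG {a}" using Sa by (intro att_intro[of S' AG a]) auto
    then show False using Sa(2) unfolding SG_def by blast
  qed
  have stSG: "\<forall>a\<in>A - SG. attacks R A ctr SG {a}"
    using AGSG unfolding SG_def by (auto intro: att_mono)
  have clSG: "closed_set R A SG"
    unfolding closed_set_def
  proof (intro allI impI ballI)
    fix S' a assume S': "S' \<subseteq> SG" and a: "a \<in> A" and d: "derives R A S' a"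
    show "a \<in> SG"
    proof (cases "\<exists>s W. a = Indep s W")
      case False
      then consider "an_sent a" | "\<exists>p W. a = Bp p W" using asm_cases a by blast
      then have "S' = {a}"
      proof cases
        case 1 then show ?thesis using d der_Arr der_Noe by (cases a) auto
      next
        case 2 then show ?thesis using d der_Bp by blast
      qed
      then show ?thesis using S' by blast
    next
      case True
      then obtain s W where sW: "a = Indep s W" by blast
      from der_Indep[OF d[unfolded sW]] show ?thesis
      proof
        assume "S' = {Indep s W}" then show ?thesis using S' sW by blast
      next
        assume "s = {x, y} \<and> W = Z \<and> {Bp p Z | p. vpath V p x y} \<subseteq> S'"
        then have inSG: "Bp p0 Z \<in> SG" using S' p0(1) by blast
        have "arr_body T \<subseteq> AG" using AG_arr unfolding G_def by (auto simp: arr_body_def)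
        moreover have "derives R A (arr_body T) (Ap p0 Z)" using der_body[OF r_ap[OF T(1)]] Tp by blast
        ultimately have "attacks R A ctr AG {Bp p0 Z}" by (intro att_intro[of _ AG "Bp p0 Z"]) auto
        then show ?thesis using inSG unfolding SG_def by blast
      qed
    qed
  qed
  have SSG: "S \<subseteq> SG"
  proof
    fix a assume aS: "a \<in> S"
    have "\<not> attacks R A ctr AG {a}"
    proof
      assume "attacks R A ctr AG {a}"
      then obtain S' where S': "S' \<subseteq> AG" "derives R A S' (ctr a)" unfolding attacks_def by auto
      have "attacks R A ctr S' S" using S' aS by (intro att_intro[of S' S' a]) auto
      then have "attacks R A ctr S S'" using defS S'(1) AGA unfolding defends_def by blast
      then obtain S'' e where e: "S'' \<subseteq> S" "e \<in> S'" "derives R A S'' (ctr e)" unfolding attacks_def by blast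
      have "e \<in> AG" using e S' by blast
      then consider (ar) s t where "e = Arr s t" "(s, t) \<in> G"
        | (no) u v where "e = Noe {u, v}" "(u, v) \<notin> G" "(v, u) \<notin> G" unfolding AG_def by blast
      then show False
      proof cases
        case ar then show False using noedge e by auto
      next
        case no
        have "derives R A S'' (Ctr (Noe {u, v}))" using e(3) no by simp
        from der_CtrNoe[OF this] obtain u' v' where "{u, v} = {u', v'}" "S'' = {Arr u' v'} \<or> S'' = {Arr v' u'}"
          by blast
        moreover have "(u', v') \<in> G" if "Arr u' v' \<in> S" for u' v'
          using that SA unfolding G_def graph_of_def by (auto simp: asm_Arr)
        ultimately show False using no e(1) by (auto simp: doubleton_eq_iff)
      qed
    qed
    then show "a \<in> SG" using aS SA unfolding SG_def by blast
  qed
  have "complete_ext R A ctr SG" using complete_of_stable[OF SGA cfSG stSG] .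
  then show ?thesis using clSG SSG SGA cfSG stSG by blast
qed

end

theorem proposition5:
  fixes V :: "'v set" and x y a b :: 'v and Z X :: "'v set" and \<sigma> :: semantics
    and S :: "'v sent set"
  assumes "finite V"
    and "x \<in> V" "y \<in> V" "a \<in> V" "b \<in> V" "x \<noteq> y" "a \<noteq> b"
    and "Z \<subseteq> V - {x, y}" "X \<subseteq> V - {a, b}"
    and "S \<in> extensions \<sigma> (rules_csl V x y Z) (asm_csl V) ctr"
  shows "Indep {a, b} X \<in> S \<longleftrightarrow> d_separated (graph_of V S) a b X"
proof -
  interpret csl V x y Z using assms(1,2,3,6,8) by unfold_locales
  have ext: "case \<sigma> of Preferred \<Rightarrow> preferred_ext R A ctr S | Stable \<Rightarrow> stable_ext R A ctr S"
    using assms(10) by (simp add: extensions_def)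
  have props: "S \<subseteq> A \<and> conflict_free R A ctr S \<and> closed_set R A S \<and> (\<forall>a\<in>A - S. attacks R A ctr S {a})"
  proof (cases \<sigma>)
    case Preferred
    then have p: "preferred_ext R A ctr S" using ext by simp
    then have cl: "closed_set R A S" and co: "complete_ext R A ctr S"
      and mx: "\<not> (\<exists>S'. closed_set R A S' \<and> complete_ext R A ctr S' \<and> S \<subset> S')"
      unfolding preferred_ext_def by blast+
    obtain S2 where S2: "closed_set R A S2" "complete_ext R A ctr S2" "S \<subseteq> S2" "S2 \<subseteq> A"
      "conflict_free R A ctr S2" "\<forall>a\<in>A - S2. attacks R A ctr S2 {a}"
      using pref_ext[OF cl co] by blast
    have "S = S2" using mx S2(1,2,3) by blast
    then show ?thesis using S2 by blast
  next
    case Stable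
    then have "stable_ext R A ctr S" using ext by simp
    then show ?thesis unfolding stable_ext_def admissible_def by blast
  qed
  then show ?thesis using core[of S a b X] assms(4,5,7,9) by blast
qed

end
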